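(* For every positive integer $n$, there exists a set $P$ of $n$ distinct points in the Euclidean plane $\mathbb{R}^2$ and $\lfloor n/4\rfloor$ distinct positive real numbers $d_1,\dots,d_{\lfloor n/4\rfloor}$ such that for each $j$, the number of unordered pairs $\{p,q\}\subset P$ with $p\neq q$ and $\|p-q\|=d_j$ is at least $n+1$.
   Context: A distance $d$ "occurs $t$ times" in a finite point set $P\subset\mathbb{R}^2$ if exactly $t$ unordered pairs of distinct points of $P$ are at Euclidean distance $d$. When $\lfloor n/4\rfloor=0$ the statement is vacuous. *)

theory Defs
  imports "HOL-Analysis.Analysis"
begin

definition occurrences :: "(real^2) set \<Rightarrow> real \<Rightarrow> nat" where
  "occurrences P d = card {{p, q} | p q. p \<in> P \<and> q \<in> P \<and> p \<noteq> q \<and> dist p q = d}"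

end

theory Submission
  imports Defs
begin

definition emb :: "complex \<Rightarrow> real^2" where "emb z = vector [Re z, Im z]"

lemma dist_emb: "dist (emb z) (emb w) = cmod (z - w)"
proof -
  have "dist (emb z) (emb w) = sqrt ((Re z - Re w)^2 + (Im z - Im w)^2)"
    unfolding dist_norm norm_vec_def L2_set_def emb_def by (simp add: sum_2)
  also have "\<dots> = cmod (z - w)" by (simp add: cmod_def)
  finally show ?thesis .
qed

lemma inj_emb: "inj emb"
proof (rule injI)
  fix z w assume "emb z = emb w"
  then have "dist (emb z) (emb w) = 0" by simp
  then show "z = w" by (simp add: dist_emb)
qed

definition w :: "nat \<Rightarrow> complex" where "w N = cis (2*pi / real N)"

lemma w_pow: "w N ^ k = cis (2*pi*real k / real N)"
proof -
  have "w N ^ k = cis (real k * (2*pi / real N))" by (simp add: w_def Complex.DeMoivre)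
  then show ?thesis by (simp add: mult.commute)
qed

lemma norm_w_pow[simp]: "cmod (w N ^ k) = 1"
  by (simp add: w_pow)

lemma w_pow_N: "N > 0 \<Longrightarrow> w N ^ N = 1"
  by (simp add: w_pow)

lemma w_pow_ne1: assumes "0 < k" "k < N" shows "w N ^ k \<noteq> 1"
proof
  assume "w N ^ k = 1"
  then have "cos (2*pi*real k / real N) = 1" unfolding w_pow
    by (metis cis.sel(1) one_complex.sel(1))
  then obtain n :: int where n: "2*pi*real k / real N = n * 2 * pi" by (auto simp: cos_one_2pi_int)
  have "real k / real N = (2*pi*real k / real N) / (2*pi)" by simp
  also have "\<dots> = n" using n by simp
  finally have "real k / real N = n" .
  moreover have "0 < real k / real N" "real k / real N < 1" using assms by auto
  ultimately have "0 < n" "n < 1" by simp_all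
  then show False by simp
qed

lemma w_pow_mod: assumes "N > 0" shows "w N ^ k = w N ^ (k mod N)"
proof -
  have "w N ^ k = w N ^ (N * (k div N) + k mod N)" by simp
  also have "\<dots> = w N ^ (k mod N)" by (simp only: power_add power_mult w_pow_N[OF assms] power_one mult_1)
  finally show ?thesis .
qed

lemma w_pow_eq: assumes "a < N" "b < N" "w N ^ a = w N ^ b" shows "a = b"
proof (rule ccontr)
  assume ne: "a \<noteq> b"
  { fix a b assume ab: "a < b" "b < N" "w N ^ a = w N ^ b"
    have "w N ^ b = w N ^ (a + (b - a))" using ab by simp
    then have "w N ^ b = w N ^ a * w N ^ (b - a)" by (simp only: power_add)
    then have "w N ^ (b - a) = 1" using ab(3)
      by (metis mult_cancel_left1 norm_w_pow zero_neq_one norm_zero)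
    moreover have "0 < b-a" "b - a < N" using ab by auto
    ultimately have False using w_pow_ne1[of "b-a" N] by blast }
  then show False using ne assms by (metis linorder_neqE_nat)
qed

lemma w_pow_eq1_dvd: assumes "N > 0" "w N ^ k = 1" shows "N dvd k"
proof -
  have "w N ^ (k mod N) = 1" using assms w_pow_mod by metis
  then have "k mod N = 0" using w_pow_ne1[of "k mod N" N] assms by (metis mod_less_divisor not_gr_zero)
  then show ?thesis by auto
qed

lemma w_ne0[simp]: "w N ^ k \<noteq> 0"
  using norm_w_pow[of N k] by (metis norm_zero zero_neq_one)

lemma w_add: "w N ^ (a + b) = w N ^ a * w N ^ b" by (simp add: power_add)

lemma chord_shift: "cmod (w N ^ i - w N ^ (i + m)) = cmod (1 - w N ^ m)"
proof -
  have "w N ^ i - w N ^ (i + m) = w N ^ i * (1 - w N ^ m)" by (simp add: power_add algebra_simps)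
  then show ?thesis by (simp add: norm_mult)
qed

lemma cmod_1_cis_sq: "(cmod (1 - cis x))^2 = 2 - 2 * cos x"
proof -
  have "(cmod (1 - cis x))^2 = (1 - cos x)^2 + (sin x)^2" by (simp add: cmod_power2)
  also have "\<dots> = 2 - 2 * cos x" using sin_cos_squared_add[of x] by (simp add: power2_eq_square algebra_simps)
  finally show ?thesis .
qed

lemma chord_pos: assumes "0 < m" "m < N" shows "cmod (1 - w N ^ m) > 0"
  using w_pow_ne1[OF assms] by simp

lemma chord_inj: assumes "0 < a" "2*a \<le> N" "0 < b" "2*b \<le> N"
  and eq: "cmod (1 - w N ^ a) = cmod (1 - w N ^ b)" shows "a = b"
proof -
  have N: "real N > 0" using assms by simp
  have ceq: "cos (2*pi*real a / real N) = cos (2*pi*real b / real N)"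
    using arg_cong[OF eq, of "\<lambda>x. x^2"] unfolding w_pow cmod_1_cis_sq by simp
  have pa: "2*pi*real a / real N \<le> pi" and pb: "2*pi*real b / real N \<le> pi"
  proof -
    have "2*real a \<le> real N" "2*real b \<le> real N" using assms by linarith+
    then show "2*pi*real a / real N \<le> pi" "2*pi*real b / real N \<le> pi" using N
      by (simp_all add: divide_le_eq mult.commute mult.left_commute)
  qed
  have na: "0 \<le> 2*pi*real a / real N" and nb: "0 \<le> 2*pi*real b / real N" by simp_all
  have "2*pi*real a / real N = 2*pi*real b / real N"
    by (rule cos_inj_pi[OF na pa nb pb ceq])
  then show ?thesis using N by (simp add: divide_cancel_right)
qed

lemma inter_even: fixes z om :: complex
  assumes "cmod z = 1" "cmod (1 + om - z) = 1" "cmod om = 1" "om \<noteq> -1"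
  shows "z = 1 \<or> z = om"
proof -
  have e1: "z * cnj z = 1" using assms(1) complex_norm_square[of z] by simp
  have e2: "om * cnj om = 1" using assms(3) complex_norm_square[of om] by simp
  have e3: "(1 + om - z) * cnj (1 + om - z) = 1" using assms(2) complex_norm_square[of "1 + om - z"] by simp
  then have e3': "(1 + om - z) * (1 + cnj om - cnj z) = 1" by simp
  have id: "(1 + om) * ((z - 1) * (z - om)) = - (z * om * ((1 + om - z) * (1 + cnj om - cnj z) - 1))
     + (1 + om - z) * (z * (om * cnj om - 1) - om * (z * cnj z - 1))"
    by (simp add: algebra_simps)
  have "(1 + om) * ((z - 1) * (z - om)) = 0" unfolding id e1 e2 e3' by simp
  moreover have "1 + om \<noteq> 0" using assms(4) by (metis add.commute add_eq_0_iff)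
  ultimately show ?thesis by auto
qed

lemma inter_odd: fixes z :: complex
  assumes "cmod z = 1" "cmod (2 - z) = 1" shows "z = 1"
proof -
  have e1: "z * cnj z = 1" using assms(1) complex_norm_square[of z] by simp
  have e3: "(2 - z) * cnj (2 - z) = 1" using assms(2) complex_norm_square[of "2 - z"] by simp
  then have e3': "(2 - z) * (2 - cnj z) = 1" by simp
  have "4 - 2*cnj z - 2*z + z * cnj z = 1" using e3' by (simp add: algebra_simps)
  then have "2*(2 - cnj z - z) = 0" using e1 by (simp add: algebra_simps)
  then have e4: "2 - cnj z - z = 0" by (metis mult_eq_0_iff zero_neq_numeral)
  have id: "(z - 1) * (z - 1) = - (z * (2 - cnj z - z)) - (z * cnj z - 1)"
    by (simp add: algebra_simps)
  have "(z - 1) * (z - 1) = 0" unfolding id e1 e4 by simp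
  then show ?thesis by auto
qed

definition AA :: "nat \<Rightarrow> complex set" where "AA N = (\<lambda>i. w N ^ i) ` {..<N}"
definition BB :: "complex \<Rightarrow> nat \<Rightarrow> complex set" where "BB c N = (\<lambda>i. c - w N ^ i) ` {..<N}"

lemma w_in_AA: assumes "N > 0" shows "w N ^ k \<in> AA N"
  unfolding AA_def using w_pow_mod[OF assms, of k] assms by (intro rev_image_eqI[of "k mod N"]) auto

lemma w_in_BB: assumes "N > 0" shows "c - w N ^ k \<in> BB c N"
  unfolding BB_def using w_pow_mod[OF assms, of k] assms by (intro rev_image_eqI[of "k mod N"]) auto

lemma AA_norm: "z \<in> AA N \<Longrightarrow> cmod z = 1" by (auto simp: AA_def)

lemma card_AA: "card (AA N) = N"
  unfolding AA_def by (subst card_image) (auto intro!: inj_onI dest: w_pow_eq)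

lemma card_BB: "card (BB c N) = N"
  unfolding BB_def by (subst card_image) (auto intro!: inj_onI dest: w_pow_eq)

lemma occ_lower:
  assumes "finite P" "inj_on F I"
    "\<And>i. i\<in>I \<Longrightarrow> \<exists>p q. F i = {p,q} \<and> p\<in>P \<and> q\<in>P \<and> p\<noteq>q \<and> dist p q = d"
  shows "card I \<le> occurrences P d"
proof -
  let ?S = "{{p, q} | p q. p \<in> P \<and> q \<in> P \<and> p \<noteq> q \<and> dist p q = d}"
  have sub: "F ` I \<subseteq> ?S" using assms(3) by blast
  have fin: "finite ?S" by (rule finite_subset[of _ "Pow P"]) (auto simp: assms(1))
  have "card (F ` I) \<le> card ?S" by (rule card_mono[OF fin sub])
  then show ?thesis using card_image[OF assms(2)] unfolding occurrences_def by simp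
qed

lemma w_distinct: assumes "0 < m" "m < N" shows "w N ^ i \<noteq> w N ^ (i+m)"
proof
  assume "w N ^ i = w N ^ (i+m)"
  then have "w N ^ i * 1 = w N ^ i * w N ^ m" by (simp add: power_add)
  then have "w N ^ m = 1" by (metis mult_left_cancel w_ne0)
  then show False using w_pow_ne1[OF assms] by simp
qed

lemma pair_inj:
  assumes m: "0 < m" "2*m < N" and i: "i < N" "i' < N"
    and eq: "w N ^ i = w N ^ i' \<and> w N ^ (i+m) = w N ^ (i'+m) \<or> w N ^ i = w N ^ (i'+m) \<and> w N ^ (i+m) = w N ^ i'"
  shows "i = i'"
  using eq
proof
  assume "w N ^ i = w N ^ i' \<and> w N ^ (i+m) = w N ^ (i'+m)"
  then show ?thesis using w_pow_eq i by blast
next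
  assume h: "w N ^ i = w N ^ (i'+m) \<and> w N ^ (i+m) = w N ^ i'"
  have "w N ^ i * w N ^ (2*m) = w N ^ (i+m) * w N ^ m" by (simp add: power_add mult_2 mult.assoc)
  also have "\<dots> = w N ^ i' * w N ^ m" using h by simp
  also have "\<dots> = w N ^ i * 1" using h by (simp add: power_add)
  finally have "w N ^ (2*m) = 1" by (metis mult_left_cancel w_ne0)
  then show ?thesis using w_pow_ne1[of "2*m" N] m by simp
qed

lemma count_lemma:
  fixes c :: complex and N m :: nat and J :: "nat set"
  assumes N: "N > 0" and m: "0 < m" "2*m < N" and J: "J \<subseteq> {..<N}"
    and coll: "\<And>l. l \<in> J \<Longrightarrow> \<not> (c - w N ^ l \<in> AA N \<and> c - w N ^ (l+m) \<in> AA N)"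
  shows "N + card J \<le> occurrences (emb ` (AA N \<union> BB c N)) (cmod (1 - w N ^ m))"
proof -
  define F where "F = (\<lambda>x. case x of Inl i \<Rightarrow> {emb (w N ^ i), emb (w N ^ (i+m))}
     | Inr l \<Rightarrow> {emb (c - w N ^ l), emb (c - w N ^ (l+m))})"
  define I where "I = Inl ` {..<N} \<union> Inr ` J"
  have finJ: "finite J" using J finite_subset by blast
  have cardI: "card I = N + card J"
    unfolding I_def by (subst card_Un_disjoint) (auto simp: card_image finJ)
  have mN: "m < N" using m by simp
  have embeq: "({emb a, emb b} = {emb a', emb b'}) = (a = a' \<and> b = b' \<or> a = b' \<and> b = a')" for a b a' b'
    by (simp add: doubleton_eq_iff inj_eq[OF inj_emb])
  have injF: "inj_on F I"
  proof (rule inj_onI)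
    fix x y assume x: "x \<in> I" and y: "y \<in> I" and Fxy: "F x = F y"
    show "x = y"
    proof (cases x)
      case (Inl i)
      note xi = Inl
      show ?thesis
      proof (cases y)
        case (Inl i')
        have e: "{emb (w N ^ i), emb (w N ^ (i+m))} = {emb (w N ^ i'), emb (w N ^ (i'+m))}"
          using Fxy xi Inl by (simp add: F_def)
        have ii: "i < N" "i' < N" using x y xi Inl I_def by auto
        have "i = i'" using e unfolding embeq by (rule pair_inj[OF m ii])
        then show ?thesis using xi Inl by simp
      next
        case (Inr l)
        have l: "l \<in> J" using y Inr I_def by auto
        have "emb (c - w N ^ l) \<in> F x" "emb (c - w N ^ (l+m)) \<in> F x"
          using Fxy Inr unfolding F_def by auto
        then have "c - w N ^ l \<in> AA N \<and> c - w N ^ (l+m) \<in> AA N"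
          using xi w_in_AA[OF N] unfolding F_def by (auto simp: inj_eq[OF inj_emb])
        then show ?thesis using coll[OF l] by blast
      qed
    next
      case (Inr l)
      note xl = Inr
      have l: "l \<in> J" using x Inr I_def by auto
      show ?thesis
      proof (cases y)
        case (Inl i)
        have "emb (c - w N ^ l) \<in> F y" "emb (c - w N ^ (l+m)) \<in> F y"
          using Fxy xl unfolding F_def by auto
        then have "c - w N ^ l \<in> AA N \<and> c - w N ^ (l+m) \<in> AA N"
          using Inl w_in_AA[OF N] unfolding F_def by (auto simp: inj_eq[OF inj_emb])
        then show ?thesis using coll[OF l] by blast
      next
        case (Inr l')
        have l': "l' \<in> J" using y Inr I_def by auto
        have e: "{emb (c - w N ^ l), emb (c - w N ^ (l+m))} = {emb (c - w N ^ l'), emb (c - w N ^ (l'+m))}"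
          using Fxy xl Inr by (simp add: F_def)
        have ii: "l < N" "l' < N" using l l' J by auto
        have "l = l'" using e unfolding embeq by (intro pair_inj[OF m ii]) simp
        then show ?thesis using xl Inr by simp
      qed
    qed
  qed
  have mem: "\<exists>p q. F x = {p,q} \<and> p \<in> emb ` (AA N \<union> BB c N) \<and> q \<in> emb ` (AA N \<union> BB c N)
      \<and> p\<noteq>q \<and> dist p q = cmod (1 - w N ^ m)" if "x \<in> I" for x
  proof (cases x)
    case (Inl i)
    show ?thesis
      apply (rule exI[of _ "emb (w N ^ i)"], rule exI[of _ "emb (w N ^ (i+m))"])
      using Inl w_in_AA[OF N] w_distinct[OF m(1) mN] chord_shift
      by (auto simp: F_def dist_emb inj_eq[OF inj_emb])
  next
    case (Inr l)
    have d: "cmod ((c - w N ^ l) - (c - w N ^ (l+m))) = cmod (1 - w N ^ m)"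
      using chord_shift[of N l m] by (simp add: norm_minus_commute)
    show ?thesis
      apply (rule exI[of _ "emb (c - w N ^ l)"], rule exI[of _ "emb (c - w N ^ (l+m))"])
      using Inr w_in_BB[OF N] w_distinct[OF m(1) mN] d
      by (auto simp: F_def dist_emb inj_eq[OF inj_emb])
  qed
  have "card I \<le> occurrences (emb ` (AA N \<union> BB c N)) (cmod (1 - w N ^ m))"
    by (rule occ_lower[OF _ injF mem]) (auto simp: AA_def BB_def)
  then show ?thesis using cardI by simp
qed

lemma card_emb: "card (emb ` S) = card S"
  by (rule card_image) (metis inj_emb inj_on_subset subset_UNIV)

lemma finite_AA[simp]: "finite (AA N)" by (simp add: AA_def)
lemma finite_BB[simp]: "finite (BB c N)" by (simp add: BB_def)

lemma norm_w[simp]: "cmod (w N) = 1" using norm_w_pow[of N 1] by simp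

theorem theorem1:
  fixes n :: nat
  assumes "n > 0"
  shows "\<exists>(P :: (real^2) set) (d :: nat \<Rightarrow> real).
           finite P \<and> card P = n \<and> inj_on d {..<n div 4} \<and>
           (\<forall>j<n div 4. d j > 0 \<and> occurrences P (d j) \<ge> n + 1)"
proof (cases "n < 4")
  case True
  have "n div 4 = 0" using True by simp
  then show ?thesis
    by (intro exI[of _ "emb ` AA n"] exI[of _ "\<lambda>_. 1"]) (simp add: card_emb card_AA)
next
  case False
  define N where "N = n div 2 + 1"
  have N3: "N \<ge> 3" using False unfolding N_def by linarith
  have N0: "N > 0" using N3 by simp
  define d where "d = (\<lambda>j::nat. cmod (1 - w N ^ (j+1)))"
  have jb: "2*(j+1) < N" if "j < n div 4" for j using that unfolding N_def by presburger
  have dinj: "inj_on d {..<n div 4}"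
  proof (rule inj_onI)
    fix j j' assume "j \<in> {..<n div 4}" "j' \<in> {..<n div 4}" "d j = d j'"
    then have "j + 1 = j' + 1" using jb unfolding d_def
      by (intro chord_inj[of "j+1" N "j'+1"]) (auto simp: less_imp_le)
    then show "j = j'" by simp
  qed
  have dpos: "d j > 0" if "j < n div 4" for j
    using chord_pos[of "j+1" N] jb[OF that] unfolding d_def by simp
  show ?thesis
  proof (cases "even n")
    case True
    define c where "c = 1 + w N"
    have nN: "n = 2*N - 2" using True unfolding N_def by auto
    have om1: "w N \<noteq> 1" using w_pow_ne1[of 1 N] N3 by simp
    have omm1: "w N \<noteq> -1"
    proof
      assume "w N = -1"
      then have "w N ^ 2 = 1" by simp
      then show False using w_pow_ne1[of 2 N] N3 by simp
    qed
    have inter: "AA N \<inter> BB c N = {1, w N}"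
    proof
      show "AA N \<inter> BB c N \<subseteq> {1, w N}"
      proof
        fix z assume z: "z \<in> AA N \<inter> BB c N"
        then obtain l where "z = c - w N ^ l" by (auto simp: BB_def)
        then have "cmod (1 + w N - z) = 1" by (simp add: c_def)
        moreover have "cmod z = 1" using z AA_norm by blast
        ultimately show "z \<in> {1, w N}" using inter_even[of z "w N"] omm1 by auto
      qed
      show "{1, w N} \<subseteq> AA N \<inter> BB c N"
        using w_in_AA[OF N0, of 0] w_in_AA[OF N0, of 1] w_in_BB[OF N0, of c 0] w_in_BB[OF N0, of c 1]
        by (auto simp: c_def)
    qed
    have cardP: "card (AA N \<union> BB c N) = n"
    proof -
      have "card (AA N \<union> BB c N) + card (AA N \<inter> BB c N) = N + N"
        using card_Un_Int[of "AA N" "BB c N"] card_AA card_BB by simp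
      moreover have "card (AA N \<inter> BB c N) = 2" using inter om1 by simp
      ultimately show ?thesis using nN by simp
    qed
    have occ: "occurrences (emb ` (AA N \<union> BB c N)) (d j) \<ge> n + 1" if j: "j < n div 4" for j
    proof -
      define m where "m = j + 1"
      have m: "0 < m" "2*m < N" using jb[OF j] m_def by auto
      have coll: "\<not> (c - w N ^ l \<in> AA N \<and> c - w N ^ (l+m) \<in> AA N)" if l: "l \<in> {1..<N}" for l
      proof
        assume h: "c - w N ^ l \<in> AA N \<and> c - w N ^ (l+m) \<in> AA N"
        then have h2: "c - w N ^ l \<in> {1, w N}" "c - w N ^ (l+m) \<in> {1, w N}"
          using inter w_in_BB[OF N0] by blast+
        have ne: "c - w N ^ l \<noteq> c - w N ^ (l+m)" using w_distinct[of m N l] m by simp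
        show False
        proof (cases "c - w N ^ l = 1")
          case True
          then have "w N ^ l = w N ^ 1" by (simp add: c_def)
          then have l1: "l = 1" using w_pow_eq[of l N 1] l N3 by simp
          have "c - w N ^ (l+m) = w N" using h2 ne True by auto
          then have "w N ^ (1+m) = 1" using l1 by (simp add: c_def)
          then show False using w_pow_ne1[of "1+m" N] m by simp
        next
          case False
          then have "c - w N ^ l = w N" using h2 by auto
          then have "w N ^ l = w N ^ 0" by (simp add: c_def)
          then have "l = 0" using w_pow_eq[of l N 0] l N3 by simp
          then show False using l by simp
        qed
      qed
      have "N + card {1..<N} \<le> occurrences (emb ` (AA N \<union> BB c N)) (cmod (1 - w N ^ m))"
        by (rule count_lemma[OF N0 m _ coll]) auto
      then show ?thesis using nN N3 unfolding d_def m_def by simp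
    qed
    show ?thesis
      by (intro exI[of _ "emb ` (AA N \<union> BB c N)"] exI[of _ d])
         (use occ in \<open>simp add: card_emb cardP dinj dpos\<close>)
  next
    case False
    define c :: complex where "c = 2"
    have nN: "n = 2*N - 1" using False unfolding N_def by auto
    have inter: "AA N \<inter> BB c N = {1}"
    proof
      show "AA N \<inter> BB c N \<subseteq> {1}"
      proof
        fix z assume z: "z \<in> AA N \<inter> BB c N"
        then obtain l where "z = c - w N ^ l" by (auto simp: BB_def)
        then have "cmod (2 - z) = 1" by (simp add: c_def)
        moreover have "cmod z = 1" using z AA_norm by blast
        ultimately show "z \<in> {1}" using inter_odd[of z] by auto
      qed
      show "{1} \<subseteq> AA N \<inter> BB c N"
        using w_in_AA[OF N0, of 0] w_in_BB[OF N0, of c 0]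
        by (auto simp: c_def)
    qed
    have cardP: "card (AA N \<union> BB c N) = n"
    proof -
      have "card (AA N \<union> BB c N) + card (AA N \<inter> BB c N) = N + N"
        using card_Un_Int[of "AA N" "BB c N"] card_AA card_BB by simp
      moreover have "card (AA N \<inter> BB c N) = 1" using inter by simp
      ultimately show ?thesis using nN by simp
    qed
    have occ: "occurrences (emb ` (AA N \<union> BB c N)) (d j) \<ge> n + 1" if j: "j < n div 4" for j
    proof -
      define m where "m = j + 1"
      have m: "0 < m" "2*m < N" using jb[OF j] m_def by auto
      have coll: "\<not> (c - w N ^ l \<in> AA N \<and> c - w N ^ (l+m) \<in> AA N)" if l: "l \<in> {..<N}" for l
      proof
        assume h: "c - w N ^ l \<in> AA N \<and> c - w N ^ (l+m) \<in> AA N"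
        then have h2: "c - w N ^ l \<in> {1}" "c - w N ^ (l+m) \<in> {1}"
          using inter w_in_BB[OF N0] by blast+
        have ne: "c - w N ^ l \<noteq> c - w N ^ (l+m)" using w_distinct[of m N l] m by simp
        then show False using h2 by (metis singletonD)
      qed
      have "N + card {..<N} \<le> occurrences (emb ` (AA N \<union> BB c N)) (cmod (1 - w N ^ m))"
        by (rule count_lemma[OF N0 m _ coll]) auto
      then show ?thesis using nN N3 unfolding d_def m_def by simp
    qed
    show ?thesis
      by (intro exI[of _ "emb ` (AA N \<union> BB c N)"] exI[of _ d])
         (use occ in \<open>simp add: card_emb cardP dinj dpos\<close>)
  qed
qed

end
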